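(* Let $p\ge1$, $n,K\in\mathbb{N}$, $\Omega\subseteq\mathbb{R}^d$ compact and $z\in\mathbb{R}^d\setminus\Omega$. Let $f$ be a depth-$K$ MPNN on $G_{\le n}(\Omega)$ whose aggregation functions $\phi^{(k)}$, combine functions $\psi^{(k)}$ and readout are jointly continuous in their inputs and parameters, with parameters ranging over compact sets. For $0\le k\le K$ let $\Omega_k$ be the set of all feature vectors $x_v^{(k)}$ attainable after $k$ message passing layers, over all graphs in $G_{\le n}(\Omega)$, all nodes and all parameter choices, and let $z_k\notin\Omega_k$. Then for each $k$ there exist constants $C\ge c>0$ such that for every $G\in G_{\le n}(\Omega)$, every $v\in V_G$ and every parameter choice, $$C\cdot TD\big(T_v^{(k)},\bar T_z\big)\ \ge\ \|z_k-x_v^{(k)}\|_p\ \ge\ c\cdot TD\big(T_v^{(k)},\bar T_z\big).$$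
   Context: $G_{\le n}(\Omega)$ is the set of graphs $G=(V,E,X)$ with $|V|\le n$ and node features $x_v\in\Omega$; $\mathcal N_v$ is the multiset of neighbors of $v$. An MPNN of depth $K$ computes $x_v^{(0)}=x_v$ and, for $k=1,\dots,K$, $c_v^{(k)}=\phi^{(k)}(\{\!\!\{ x_u^{(k-1)}:u\in\mathcal N_v\}\!\!\})$, $x_v^{(k)}=\psi^{(k)}(x_v^{(k-1)},c_v^{(k)})$, and outputs $\upsilon(\{\!\!\{ x_v^{(K)}:v\in V\}\!\!\})$. Computation trees: $T_v^{(0)}$ is a single root node with feature $x_v$; $T_v^{(k)}$ is obtained from $T_v^{(k-1)}$ by attaching to each leaf (corresponding to a graph node $u$) children corresponding to the neighbors of $u$ in $G$, each carrying its feature from $G$. The blank tree $\bar T_z$ is a single node with feature $z$. For a rooted tree $T$ with root $r$, $\mathcal T_r$ is the multiset of subtrees rooted at the children of $r$. For multisets of trees $A,B$ of size at most $n$, $W^{(\bar T_z)}_{TD,1}(A,B)=\min_{\tau\in S_n}\sum_{j=1}^n TD(A'_j,B'_{\tau(j)})$ where $A',B'$ are $A,B$ padded with copies of $\bar T_z$ to exactly $n$ elements. The tree distance is defined recursively: $TD(T_a,T_b)=\|x_a-x_b\|_p+W^{(\bar T_z)}_{TD,1}(\mathcal T_a,\mathcal T_b)$ if the maximal depth of $T_a,T_b$ is positive, and $TD(T_a,T_b)=\|x_a-x_b\|_p$ otherwise, where $x_a,x_b$ are the root features. *)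

theory Defs
  imports "HOL-Analysis.Analysis" "HOL-Library.Multiset" "HOL-Combinatorics.Permutations"
begin

text \<open>Vectors of R^m are encoded as functions nat => real vanishing from index m on.
  The type nat => real carries the product topology, which on this subspace is the Euclidean one.\<close>

definition Rd :: "nat \<Rightarrow> (nat \<Rightarrow> real) set" where
  "Rd m = {x. \<forall>i\<ge>m. x i = 0}"

definition lp_norm :: "real \<Rightarrow> nat \<Rightarrow> (nat \<Rightarrow> real) \<Rightarrow> real" where
  "lp_norm p m x = (\<Sum>i<m. \<bar>x i\<bar> powr p) powr (1 / p)"

text \<open>Graphs with at most n nodes: vertex set {0..<m}, m <= n, simple undirected edge relation E,
  node features X v in Omega.\<close>

type_synonym graph = "nat \<times> (nat \<Rightarrow> nat \<Rightarrow> bool) \<times> (nat \<Rightarrow> nat \<Rightarrow> real)"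

definition graphs_le :: "nat \<Rightarrow> (nat \<Rightarrow> real) set \<Rightarrow> graph set" where
  "graphs_le n \<Omega> = {(m, E, X). m \<le> n \<and>
      (\<forall>u v. E u v \<longrightarrow> u < m \<and> v < m \<and> u \<noteq> v \<and> E v u) \<and>
      (\<forall>v<m. X v \<in> \<Omega>)}"

definition nbrs :: "nat \<Rightarrow> (nat \<Rightarrow> nat \<Rightarrow> bool) \<Rightarrow> nat \<Rightarrow> nat multiset" where
  "nbrs m E v = mset_set {u. u < m \<and> E v u}"

primrec mpnn_feat ::
  "(nat \<Rightarrow> 'q \<Rightarrow> (nat \<Rightarrow> real) multiset \<Rightarrow> (nat \<Rightarrow> real)) \<Rightarrow>
   (nat \<Rightarrow> 'q \<Rightarrow> (nat \<Rightarrow> real) \<Rightarrow> (nat \<Rightarrow> real) \<Rightarrow> (nat \<Rightarrow> real)) \<Rightarrow>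
   'q \<Rightarrow> graph \<Rightarrow> nat \<Rightarrow> nat \<Rightarrow> (nat \<Rightarrow> real)" where
  "mpnn_feat \<phi> \<psi> \<theta> G 0 v = snd (snd G) v"
| "mpnn_feat \<phi> \<psi> \<theta> G (Suc k) v =
     \<psi> (Suc k) \<theta> (mpnn_feat \<phi> \<psi> \<theta> G k v)
        (\<phi> (Suc k) \<theta> (image_mset (\<lambda>u. mpnn_feat \<phi> \<psi> \<theta> G k u) (nbrs (fst G) (fst (snd G)) v)))"

datatype ftree = FNode (froot: "nat \<Rightarrow> real") (fchildren: "ftree multiset")

primrec fdepth :: "ftree \<Rightarrow> nat" where
  "fdepth (FNode x M) = (if M = {#} then 0 else Suc (Max (set_mset (image_mset fdepth M))))"

definition blank :: "(nat \<Rightarrow> real) \<Rightarrow> ftree" where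
  "blank z = FNode z {#}"

primrec comp_tree :: "graph \<Rightarrow> nat \<Rightarrow> nat \<Rightarrow> ftree" where
  "comp_tree G 0 v = FNode (snd (snd G) v) {#}"
| "comp_tree G (Suc k) v =
     FNode (snd (snd G) v) (image_mset (comp_tree G k) (nbrs (fst G) (fst (snd G)) v))"

definition pad :: "nat \<Rightarrow> (nat \<Rightarrow> real) \<Rightarrow> ftree multiset \<Rightarrow> ftree multiset" where
  "pad n z A = A + replicate_mset (n - size A) (blank z)"

definition W_pad :: "(ftree \<Rightarrow> ftree \<Rightarrow> real) \<Rightarrow> nat \<Rightarrow> (nat \<Rightarrow> real) \<Rightarrow>
    ftree multiset \<Rightarrow> ftree multiset \<Rightarrow> real" where
  "W_pad D n z A B =
     (let as = (SOME as. mset as = pad n z A); bs = (SOME bs. mset bs = pad n z B) in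
      Min {(\<Sum>j<n. D (as ! j) (bs ! (\<tau> j))) | \<tau>. \<tau> permutes {..<n}})"

text \<open>Tree distance. The auxiliary index j equals the maximal depth of the two trees whenever the
  function is entered through TD (the min only makes the recursion visibly terminating).\<close>

fun td_aux :: "real \<Rightarrow> nat \<Rightarrow> (nat \<Rightarrow> real) \<Rightarrow> nat \<Rightarrow> nat \<Rightarrow> ftree \<Rightarrow> ftree \<Rightarrow> real" where
  "td_aux p d z n 0 a b = lp_norm p d (froot a - froot b)"
| "td_aux p d z n (Suc j) a b = lp_norm p d (froot a - froot b) +
     W_pad (\<lambda>s t. td_aux p d z n (min j (max (fdepth s) (fdepth t))) s t) n z
       (fchildren a) (fchildren b)"

definition TD :: "real \<Rightarrow> nat \<Rightarrow> (nat \<Rightarrow> real) \<Rightarrow> nat \<Rightarrow> ftree \<Rightarrow> ftree \<Rightarrow> real" where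
  "TD p d z n a b = td_aux p d z n (max (fdepth a) (fdepth b)) a b"

end

theory Submission imports Defs begin

lemma lp_nonneg: "lp_norm p d x \<ge> 0"
  unfolding lp_norm_def by simp

lemma lp_pos: assumes "p > 0" "i < d" "x i \<noteq> 0" shows "lp_norm p d x > 0"
proof -
  have "(\<Sum>j<d. \<bar>x j\<bar> powr p) \<ge> \<bar>x i\<bar> powr p"
    using assms by (intro member_le_sum) auto
  moreover have "\<bar>x i\<bar> powr p > 0" using assms by simp
  ultimately have "(\<Sum>j<d. \<bar>x j\<bar> powr p) > 0" by linarith
  thus ?thesis unfolding lp_norm_def by simp
qed

lemma lp_cont:
  assumes p: "p \<ge> 1" and f: "\<And>i. continuous_on S (\<lambda>x. f x i)"
  shows "continuous_on S (\<lambda>x. lp_norm p d (f x))"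
  unfolding lp_norm_def
proof (rule continuous_on_powr')
  show "continuous_on S (\<lambda>x. \<Sum>i<d. \<bar>f x i\<bar> powr p)"
    apply (intro continuous_on_sum continuous_on_powr')
    using p by (auto intro!: continuous_intros f)
  show "continuous_on S (\<lambda>x. 1/p)" by simp
  show "\<forall>x\<in>S. 0 \<le> (\<Sum>i<d. \<bar>f x i\<bar> powr p) \<and> ((\<Sum>i<d. \<bar>f x i\<bar> powr p) = 0 \<longrightarrow> 0 < 1/p)"
    using p by (auto intro: sum_nonneg)
qed

lemma coord_cont: "continuous_on S (\<lambda>x::'a::topological_space \<Rightarrow> 'b::topological_space. x i)"
  by (rule continuous_on_product_then_coordinatewise[OF continuous_on_id])

lemma W_pad_set_finite: "finite {(\<Sum>j<n. D (as ! j) (bs ! (\<tau> j))) | \<tau>. \<tau> permutes {..<n}}"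
proof -
  have "{(\<Sum>j<n. D (as ! j) (bs ! (\<tau> j))) | \<tau>. \<tau> permutes {..<n}}
      = (\<lambda>\<tau>. \<Sum>j<n. D (as ! j) (bs ! (\<tau> j))) ` {\<tau>. \<tau> permutes {..<n}}" by auto
  thus ?thesis using finite_permutations[of "{..<n}"] by simp
qed

lemma W_pad_nonneg: assumes "\<And>s t. D s t \<ge> 0" shows "W_pad D n z A B \<ge> 0"
proof -
  define as where "as = (SOME as. mset as = pad n z A)"
  define bs where "bs = (SOME bs. mset bs = pad n z B)"
  let ?S = "{(\<Sum>j<n. D (as ! j) (bs ! (\<tau> j))) | \<tau>. \<tau> permutes {..<n}}"
  have ne: "?S \<noteq> {}" using permutes_id[of "{..<n}"] by blast
  have "Min ?S \<in> ?S" using Min_in[OF W_pad_set_finite ne] .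
  then obtain \<tau> where "Min ?S = (\<Sum>j<n. D (as ! j) (bs ! (\<tau> j)))" by blast
  also have "\<dots> \<ge> 0" using assms by (intro sum_nonneg) auto
  finally show ?thesis unfolding W_pad_def Let_def as_def bs_def by simp
qed

lemma W_pad_le:
  assumes "\<And>xs ys. mset xs = pad n z A \<Longrightarrow> mset ys = pad n z B \<Longrightarrow> (\<Sum>j<n. D (xs ! j) (ys ! j)) \<le> c"
  shows "W_pad D n z A B \<le> c"
proof -
  define as where "as = (SOME as. mset as = pad n z A)"
  define bs where "bs = (SOME bs. mset bs = pad n z B)"
  have a: "mset as = pad n z A" unfolding as_def by (rule someI_ex) (rule ex_mset)
  have b: "mset bs = pad n z B" unfolding bs_def by (rule someI_ex) (rule ex_mset)
  let ?S = "{(\<Sum>j<n. D (as ! j) (bs ! (\<tau> j))) | \<tau>. \<tau> permutes {..<n}}"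
  have "(\<Sum>j<n. D (as ! j) (bs ! (id j))) \<in> ?S" using permutes_id[of "{..<n}"] by blast
  hence "Min ?S \<le> (\<Sum>j<n. D (as ! j) (bs ! j))" using Min_le[OF W_pad_set_finite] by simp
  also have "\<dots> \<le> c" using assms a b by blast
  finally show ?thesis unfolding W_pad_def Let_def as_def bs_def by simp
qed

lemma td_nonneg: "td_aux p d z n j a b \<ge> 0"
proof (induction j arbitrary: a b rule: less_induct)
  case (less j)
  show ?case
  proof (cases j)
    case 0 thus ?thesis by (simp add: lp_nonneg)
  next
    case (Suc j')
    have "W_pad (\<lambda>s t. td_aux p d z n (min j' (max (fdepth s) (fdepth t))) s t) n z (fchildren a) (fchildren b) \<ge> 0"
      by (rule W_pad_nonneg) (rule less.IH, use Suc in auto)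
    thus ?thesis using Suc by (simp add: lp_nonneg)
  qed
qed

lemma td_ge_root: "td_aux p d z n j a b \<ge> lp_norm p d (froot a - froot b)"
proof (cases j)
  case (Suc j')
  have "W_pad (\<lambda>s t. td_aux p d z n (min j' (max (fdepth s) (fdepth t))) s t) n z (fchildren a) (fchildren b) \<ge> 0"
    by (rule W_pad_nonneg) (rule td_nonneg)
  thus ?thesis using Suc by simp
qed simp

lemma size_pad: "size (pad n z A) \<ge> n" unfolding pad_def by simp

lemma pad_empty: "pad n z {#} = replicate_mset n (blank z)" unfolding pad_def by simp

lemma depth_comp: "fdepth (comp_tree G k v) \<le> k"
proof (induction k arbitrary: v)
  case (Suc k)
  show ?case using Suc by (auto simp: Max_le_iff)
qed simp

lemma root_comp: "froot (comp_tree G k v) = snd (snd G) v" by (cases k) auto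

lemma lp_zero: "p > 0 \<Longrightarrow> lp_norm p d (x - x) = 0" unfolding lp_norm_def by simp

definition goodT where
  "goodT n \<Omega> z T \<longleftrightarrow> T = blank z \<or> (\<exists>G\<in>graphs_le n \<Omega>. \<exists>k v. v < fst G \<and> T = comp_tree G k v)"

lemma goodT_root: "goodT n \<Omega> z T \<Longrightarrow> froot T \<in> insert z \<Omega>"
  unfolding goodT_def graphs_le_def by (auto simp: root_comp blank_def)

lemma goodT_children: assumes "goodT n \<Omega> z T" "t \<in># fchildren T" shows "goodT n \<Omega> z t"
  using assms unfolding goodT_def
proof (elim disjE bexE exE conjE)
  fix G k v assume G: "G \<in> graphs_le n \<Omega>" "v < fst G" "T = comp_tree G k v"
  show "t = blank z \<or> (\<exists>G\<in>graphs_le n \<Omega>. \<exists>k v. v < fst G \<and> t = comp_tree G k v)"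
  proof (cases k)
    case 0 thus ?thesis using G assms(2) by simp
  next
    case (Suc k')
    then obtain u where "u \<in># nbrs (fst G) (fst (snd G)) v" "t = comp_tree G k' u"
      using G assms(2) by auto
    hence "u < fst G" "t = comp_tree G k' u" unfolding nbrs_def by auto
    thus ?thesis using G by blast
  qed
qed (auto simp: blank_def)

lemma td_upper:
  assumes p: "p > 0" and M: "M \<ge> 0" "\<And>x. x\<in>\<Omega> \<Longrightarrow> lp_norm p d (x - z) \<le> M"
  shows "goodT n \<Omega> z T \<Longrightarrow> td_aux p d z n j T (blank z) \<le> M * (n+1)^j"
proof (induction j arbitrary: T rule: less_induct)
  case (less j)
  have r: "lp_norm p d (froot T - z) \<le> M"
    using goodT_root[OF less.prems] M p by (auto simp: lp_zero)
  show ?case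
  proof (cases j)
    case 0 thus ?thesis using r by (simp add: blank_def)
  next
    case (Suc j')
    let ?D = "\<lambda>s t. td_aux p d z n (min j' (max (fdepth s) (fdepth t))) s t"
    have W: "W_pad ?D n z (fchildren T) {#} \<le> n * (M * (n+1)^j')"
    proof (rule W_pad_le)
      fix xs ys assume xs: "mset xs = pad n z (fchildren T)" and ys: "mset ys = pad n z {#}"
      have "(\<Sum>i<n. ?D (xs ! i) (ys ! i)) \<le> (\<Sum>i<n. M * (n+1)^j')"
      proof (rule sum_mono)
        fix i assume i: "i \<in> {..<n}"
        have li: "i < length xs" using size_pad[of n z "fchildren T"] xs i
          by (metis lessThan_iff order_less_le_trans size_mset)
        hence "xs ! i \<in># pad n z (fchildren T)" using xs by (metis nth_mem set_mset_mset)
        hence g: "goodT n \<Omega> z (xs ! i)"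
          unfolding pad_def using goodT_children[OF less.prems] by (auto simp: goodT_def split: if_splits)
        have "ys ! i \<in># replicate_mset n (blank z)"
          using ys i pad_empty[of n z] by (metis lessThan_iff nth_mem set_mset_mset size_mset size_replicate_mset)
        hence y: "ys ! i = blank z" by (meson in_replicate_mset)
        have "?D (xs ! i) (ys ! i) \<le> M * (n+1)^(min j' (max (fdepth (xs ! i)) (fdepth (ys ! i))))"
          unfolding y using Suc by (intro less.IH g) auto
        also have "\<dots> \<le> M * (n+1)^j'"
        proof -
          have "(1 + real n)^(min j' (max (fdepth (xs ! i)) (fdepth (ys ! i)))) \<le> (1 + real n)^j'"
            by (rule power_increasing) auto
          thus ?thesis using M by (intro mult_left_mono) auto
        qed
        finally show "?D (xs ! i) (ys ! i) \<le> M * (n+1)^j'" .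
      qed
      thus "(\<Sum>i<n. ?D (xs ! i) (ys ! i)) \<le> n * (M * (n+1)^j')" by simp
    qed
    have "td_aux p d z n j T (blank z) = lp_norm p d (froot T - z) + W_pad ?D n z (fchildren T) {#}"
      using Suc by (simp add: blank_def)
    also have "\<dots> \<le> M + n * (M * (n+1)^j')" using r W by simp
    also have "\<dots> \<le> M * (n+1)^j" 
    proof -
      have "M \<le> M * (n+1)^j'" using M by (simp add: mult_le_cancel_left1)
      thus ?thesis using Suc by (simp add: algebra_simps)
    qed
    finally show ?thesis .
  qed
qed

lemma nbrs_list:
  fixes f :: "nat \<Rightarrow> 'a" and m :: nat and E :: "nat \<Rightarrow> nat \<Rightarrow> bool" and v :: nat and L
  assumes L_def: "L = sorted_list_of_set {u. u < m \<and> E v u}"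
  shows "image_mset f (nbrs m E v) = image_mset (\<lambda>i. f (L ! i)) (mset [0..<length L])"
proof -
  have "nbrs m E v = mset L" unfolding nbrs_def L_def by (metis mset_sorted_list_of_multiset sorted_list_of_mset_set)
  hence "image_mset f (nbrs m E v) = mset (map f L)" by simp
  also have "map f L = map (\<lambda>i. f (L ! i)) [0..<length L]"
    by (rule nth_equalityI) auto
  finally show ?thesis by simp
qed

lemma nbrs_list_props:
  fixes m :: nat and E :: "nat \<Rightarrow> nat \<Rightarrow> bool" and v :: nat and L
  assumes L_def: "L = sorted_list_of_set {u. u < m \<and> E v u}"
  shows "length L \<le> m" "\<And>i. i < length L \<Longrightarrow> L ! i < m"
proof -
  have fin: "finite {u. u < m \<and> E v u}" by simp
  have "length L = card {u. u < m \<and> E v u}" unfolding L_def by simp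
  also have "\<dots> \<le> card {..<m}" by (rule card_mono) auto
  finally show "length L \<le> m" by simp
  fix i assume "i < length L"
  hence "L ! i \<in> set L" by simp
  thus "L ! i < m" unfolding L_def using fin by simp
qed

context
  fixes K n :: nat and dk ek :: "nat \<Rightarrow> nat" and \<Theta> :: "'q::topological_space set"
    and \<phi> :: "nat \<Rightarrow> 'q \<Rightarrow> (nat \<Rightarrow> real) multiset \<Rightarrow> (nat \<Rightarrow> real)"
    and \<psi> :: "nat \<Rightarrow> 'q \<Rightarrow> (nat \<Rightarrow> real) \<Rightarrow> (nat \<Rightarrow> real) \<Rightarrow> (nat \<Rightarrow> real)"
  assumes \<phi>_range: "\<And>k \<theta> M. 1 \<le> k \<Longrightarrow> k \<le> K \<Longrightarrow> \<theta> \<in> \<Theta> \<Longrightarrow>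
        set_mset M \<subseteq> Rd (dk (k - 1)) \<Longrightarrow> \<phi> k \<theta> M \<in> Rd (ek k)"
    and \<phi>_cont: "\<And>k m. 1 \<le> k \<Longrightarrow> k \<le> K \<Longrightarrow> m \<le> n \<Longrightarrow>
        continuous_on (\<Theta> \<times> {X. \<forall>i<m. X i \<in> Rd (dk (k - 1))})
          (\<lambda>(\<theta>, X). \<phi> k \<theta> (image_mset X (mset [0..<m])))"
    and \<psi>_range: "\<And>k \<theta> x c. 1 \<le> k \<Longrightarrow> k \<le> K \<Longrightarrow> \<theta> \<in> \<Theta> \<Longrightarrow>
        x \<in> Rd (dk (k - 1)) \<Longrightarrow> c \<in> Rd (ek k) \<Longrightarrow> \<psi> k \<theta> x c \<in> Rd (dk k)"
    and \<psi>_cont: "\<And>k. 1 \<le> k \<Longrightarrow> k \<le> K \<Longrightarrow>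
        continuous_on (\<Theta> \<times> Rd (dk (k - 1)) \<times> Rd (ek k)) (\<lambda>(\<theta>, x, c). \<psi> k \<theta> x c)"
begin

lemma feat_cont:
  assumes mn: "m \<le> n"
  shows "k \<le> K \<Longrightarrow> v < m \<Longrightarrow>
    continuous_on (\<Theta> \<times> {X. \<forall>i<m. X i \<in> Rd (dk 0)}) (\<lambda>x. mpnn_feat \<phi> \<psi> (fst x) (m, E, snd x) k v) \<and>
    (\<forall>x \<in> \<Theta> \<times> {X. \<forall>i<m. X i \<in> Rd (dk 0)}. mpnn_feat \<phi> \<psi> (fst x) (m, E, snd x) k v \<in> Rd (dk k))"
proof (induction k arbitrary: v)
  case 0
  have "continuous_on (\<Theta> \<times> {X. \<forall>i<m. X i \<in> Rd (dk 0)}) (\<lambda>x. snd x)" by (intro continuous_intros)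
  from continuous_on_product_then_coordinatewise[OF this, of v]
  show ?case using "0.prems" by auto
next
  case (Suc k)
  let ?S = "\<Theta> \<times> {X. \<forall>i<m. X i \<in> Rd (dk 0)}"
  let ?F = "\<lambda>u x. mpnn_feat \<phi> \<psi> (fst x) (m, E, snd x) k u"
  define L where "L = sorted_list_of_set {u. u < m \<and> E v u}"
  define m' where "m' = length L"
  have m'm: "m' \<le> m" and Lm: "\<And>i. i < m' \<Longrightarrow> L ! i < m"
    using nbrs_list_props[where m=m and E=E and v=v, OF L_def] unfolding m'_def by auto
  have IH: "\<And>u. u < m \<Longrightarrow> continuous_on ?S (?F u) \<and> (\<forall>x\<in>?S. ?F u x \<in> Rd (dk k))"
    using Suc by auto
  define Y where "Y = (\<lambda>x i. if i < m' then ?F (L ! i) x else (\<lambda>_. 0))"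
  have eq: "mpnn_feat \<phi> \<psi> (fst x) (m, E, snd x) (Suc k) v =
      \<psi> (Suc k) (fst x) (?F v x) (\<phi> (Suc k) (fst x) (image_mset (Y x) (mset [0..<m'])))" for x
  proof -
    have "image_mset (\<lambda>u. ?F u x) (nbrs m E v) = image_mset (\<lambda>i. ?F (L ! i) x) (mset [0..<m'])"
      using nbrs_list[where m=m and E=E and v=v and f="\<lambda>u. ?F u x", OF L_def] unfolding m'_def by simp
    also have "\<dots> = image_mset (Y x) (mset [0..<m'])"
      by (rule image_mset_cong) (auto simp: Y_def)
    finally show ?thesis by simp
  qed
  have Ycont: "continuous_on ?S Y"
  proof (rule continuous_on_coordinatewise_then_product)
    fix i show "continuous_on ?S (\<lambda>x. Y x i)"
      using IH[OF Lm] by (cases "i < m'") (auto simp: Y_def)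
  qed
  have Yrange: "\<And>x. x \<in> ?S \<Longrightarrow> \<forall>i<m'. Y x i \<in> Rd (dk k)"
    using IH[OF Lm] by (auto simp: Y_def)
  have Phicont: "continuous_on ?S (\<lambda>x. \<phi> (Suc k) (fst x) (image_mset (Y x) (mset [0..<m'])))"
  proof -
    have "continuous_on ?S (\<lambda>x. (\<lambda>(\<theta>, X). \<phi> (Suc k) \<theta> (image_mset X (mset [0..<m']))) (fst x, Y x))"
    proof (rule continuous_on_compose2[OF \<phi>_cont[of "Suc k" m']])
      show "continuous_on ?S (\<lambda>x. (fst x, Y x))" by (intro continuous_intros Ycont)
      show "(\<lambda>x. (fst x, Y x)) ` ?S \<subseteq> \<Theta> \<times> {X. \<forall>i<m'. X i \<in> Rd (dk (Suc k - 1))}"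
        using Yrange by auto
    qed (use Suc.prems m'm mn in auto)
    thus ?thesis by simp
  qed
  have Phirange: "\<And>x. x \<in> ?S \<Longrightarrow> \<phi> (Suc k) (fst x) (image_mset (Y x) (mset [0..<m'])) \<in> Rd (ek (Suc k))"
    using Yrange Suc.prems by (intro \<phi>_range) auto
  have C0: "continuous_on ?S (\<lambda>x. (\<lambda>(\<theta>, a, c). \<psi> (Suc k) \<theta> a c)
      (fst x, ?F v x, \<phi> (Suc k) (fst x) (image_mset (Y x) (mset [0..<m']))))"
  proof (rule continuous_on_compose2[OF \<psi>_cont[of "Suc k"]])
    show "continuous_on ?S (\<lambda>x. (fst x, ?F v x, \<phi> (Suc k) (fst x) (image_mset (Y x) (mset [0..<m']))))"
      by (rule continuous_on_Pair[OF continuous_on_fst[OF continuous_on_id] continuous_on_Pair[OF conjunct1[OF IH[OF Suc.prems(2)]] Phicont]])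
    show "(\<lambda>x. (fst x, ?F v x, \<phi> (Suc k) (fst x) (image_mset (Y x) (mset [0..<m'])))) ` ?S
        \<subseteq> \<Theta> \<times> Rd (dk (Suc k - 1)) \<times> Rd (ek (Suc k))"
      using IH[OF Suc.prems(2)] Phirange by auto
  qed (use Suc.prems in auto)
  have C1: "continuous_on ?S (\<lambda>x. \<psi> (Suc k) (fst x) (?F v x) (\<phi> (Suc k) (fst x) (image_mset (Y x) (mset [0..<m']))))"
    using C0 by (simp only: prod.case)
  have R: "\<forall>x\<in>?S. \<psi> (Suc k) (fst x) (?F v x) (\<phi> (Suc k) (fst x) (image_mset (Y x) (mset [0..<m']))) \<in> Rd (dk (Suc k))"
  proof
    fix x assume x: "x \<in> ?S"
    show "\<psi> (Suc k) (fst x) (?F v x) (\<phi> (Suc k) (fst x) (image_mset (Y x) (mset [0..<m']))) \<in> Rd (dk (Suc k))"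
    proof (rule \<psi>_range)
      show "fst x \<in> \<Theta>" using x by auto
      show "?F v x \<in> Rd (dk (Suc k - 1))" using x IH[OF Suc.prems(2)] by (cases x) auto
      show "\<phi> (Suc k) (fst x) (image_mset (Y x) (mset [0..<m'])) \<in> Rd (ek (Suc k))" using Phirange[OF x] .
    qed (use Suc.prems in auto)
  qed
  show ?case unfolding eq using C1 R by (rule conjI)
qed

end

lemma compact_Pi_UNIV:
  assumes "\<And>i. compact (S i :: 'b::topological_space set)"
  shows "compact {X::'a\<Rightarrow>'b. \<forall>i. X i \<in> S i}"
proof -
  have "{X::'a\<Rightarrow>'b. \<forall>i. X i \<in> S i} = PiE UNIV S" by (auto simp: PiE_def Pi_def)
  moreover have "compactin (product_topology (\<lambda>i. euclidean) UNIV) (PiE UNIV S)"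
    using assms by (simp add: compactin_PiE compact_space_def)
  ultimately show ?thesis
    by (metis compactin_euclidean_iff euclidean_product_topology)
qed

lemma bounds_compact:
  fixes g :: "'a::topological_space \<Rightarrow> real"
  assumes "compact A" "continuous_on A g" "\<And>y. y \<in> A \<Longrightarrow> g y > 0"
  shows "\<exists>a b. 0 < a \<and> a \<le> b \<and> (\<forall>y\<in>A. a \<le> g y \<and> g y \<le> b)"
proof (cases "A = {}")
  case True thus ?thesis by (intro exI[of _ 1]) auto
next
  case False
  obtain y0 where y0: "y0 \<in> A" "\<forall>y\<in>A. g y0 \<le> g y" using continuous_attains_inf[OF assms(1) False assms(2)] by blast
  obtain y1 where y1: "y1 \<in> A" "\<forall>y\<in>A. g y \<le> g y1" using continuous_attains_sup[OF assms(1) False assms(2)] by blast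
  have "0 < g y0" using assms(3)[OF y0(1)] .
  moreover have "g y0 \<le> g y1" using y0 y1 by blast
  ultimately show ?thesis using y0(2) y1(2) by blast
qed

lemma feat_restrict:
  assumes "\<forall>u<m. X u = X' u"
  shows "v < m \<Longrightarrow> mpnn_feat \<phi> \<psi> \<theta> (m, E, X) k v = mpnn_feat \<phi> \<psi> \<theta> (m, E, X') k v"
proof (induction k arbitrary: v)
  case 0 thus ?case using assms by simp
next
  case (Suc k)
  have "image_mset (\<lambda>u. mpnn_feat \<phi> \<psi> \<theta> (m, E, X) k u) (nbrs m E v) =
        image_mset (\<lambda>u. mpnn_feat \<phi> \<psi> \<theta> (m, E, X') k u) (nbrs m E v)"
  proof (rule image_mset_cong)
    fix u assume "u \<in># nbrs m E v"
    hence "u < m" unfolding nbrs_def by simp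
    thus "mpnn_feat \<phi> \<psi> \<theta> (m, E, X) k u = mpnn_feat \<phi> \<psi> \<theta> (m, E, X') k u" by (rule Suc.IH)
  qed
  thus ?case using Suc.IH[OF Suc.prems] by simp
qed

lemma Rd_neq: assumes "x \<in> Rd d" "y \<in> Rd d" "x \<noteq> y" shows "\<exists>i<d. x i \<noteq> y i"
proof (rule ccontr)
  assume "\<not> (\<exists>i<d. x i \<noteq> y i)"
  hence "x i = y i" for i using assms(1,2) unfolding Rd_def by (cases "i < d") auto
  hence "x = y" by (rule ext)
  thus False using assms(3) by simp
qed

lemma finite_I: "finite {(m, E::nat\<Rightarrow>nat\<Rightarrow>bool). m \<le> n \<and> (\<forall>u v. E u v \<longrightarrow> u < m \<and> v < m \<and> u \<noteq> v \<and> E v u)}"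
proof (rule finite_subset)
  let ?f = "\<lambda>(m::nat, R::(nat\<times>nat) set). (m, \<lambda>u v. (u,v) \<in> R)"
  show "finite (?f ` ({..n} \<times> Pow ({..<n} \<times> {..<n})))"
    by (intro finite_imageI finite_cartesian_product) simp_all
  show "{(m, E::nat\<Rightarrow>nat\<Rightarrow>bool). m \<le> n \<and> (\<forall>u v. E u v \<longrightarrow> u < m \<and> v < m \<and> u \<noteq> v \<and> E v u)}
     \<subseteq> ?f ` ({..n} \<times> Pow ({..<n} \<times> {..<n}))"
  proof
    fix x assume "x \<in> {(m, E::nat\<Rightarrow>nat\<Rightarrow>bool). m \<le> n \<and> (\<forall>u v. E u v \<longrightarrow> u < m \<and> v < m \<and> u \<noteq> v \<and> E v u)}"
    then obtain m E where x: "x = (m, E)" and m: "m \<le> n"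
      and E: "\<forall>u v. E u v \<longrightarrow> u < m \<and> v < m \<and> u \<noteq> v \<and> E v u" by blast
    have e1: "x = ?f (m, {(u,v). E u v})" unfolding x by simp
    have e2: "(m, {(u,v). E u v}) \<in> {..n} \<times> Pow ({..<n} \<times> {..<n})"
    proof -
      have "{(u,v). E u v} \<subseteq> {..<n} \<times> {..<n}"
      proof
        fix w assume "w \<in> {(u,v). E u v}"
        then obtain u v where w: "w = (u,v)" and Euv: "E u v" by blast
        have "u < m" "v < m" using E Euv by blast+
        thus "w \<in> {..<n} \<times> {..<n}" using w m by simp
      qed
      thus ?thesis using m by simp
    qed
    show "x \<in> ?f ` ({..n} \<times> Pow ({..<n} \<times> {..<n}))" by (rule image_eqI[where f = ?f and x = "(m, {(u,v). E u v})", OF e1 e2])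
  qed
qed

theorem mainTheorem11:
  fixes p :: real and n K d :: nat
    and \<Omega> :: "(nat \<Rightarrow> real) set" and z :: "nat \<Rightarrow> real"
    and dk ek :: "nat \<Rightarrow> nat"
    and \<Theta> :: "'q::euclidean_space set"
    and \<phi> :: "nat \<Rightarrow> 'q \<Rightarrow> (nat \<Rightarrow> real) multiset \<Rightarrow> (nat \<Rightarrow> real)"
    and \<psi> :: "nat \<Rightarrow> 'q \<Rightarrow> (nat \<Rightarrow> real) \<Rightarrow> (nat \<Rightarrow> real) \<Rightarrow> (nat \<Rightarrow> real)"
    and zk :: "nat \<Rightarrow> (nat \<Rightarrow> real)"
  assumes p: "p \<ge> 1"
    and \<Omega>: "compact \<Omega>" "\<Omega> \<subseteq> Rd d"
    and z: "z \<in> Rd d" "z \<notin> \<Omega>"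
    and d0: "dk 0 = d"
    and \<Theta>: "compact \<Theta>"
    and \<phi>_range: "\<And>k \<theta> M. 1 \<le> k \<Longrightarrow> k \<le> K \<Longrightarrow> \<theta> \<in> \<Theta> \<Longrightarrow>
        set_mset M \<subseteq> Rd (dk (k - 1)) \<Longrightarrow> \<phi> k \<theta> M \<in> Rd (ek k)"
    and \<phi>_cont: "\<And>k m. 1 \<le> k \<Longrightarrow> k \<le> K \<Longrightarrow> m \<le> n \<Longrightarrow>
        continuous_on (\<Theta> \<times> {X. \<forall>i<m. X i \<in> Rd (dk (k - 1))})
          (\<lambda>(\<theta>, X). \<phi> k \<theta> (image_mset X (mset [0..<m])))"
    and \<psi>_range: "\<And>k \<theta> x c. 1 \<le> k \<Longrightarrow> k \<le> K \<Longrightarrow> \<theta> \<in> \<Theta> \<Longrightarrow>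
        x \<in> Rd (dk (k - 1)) \<Longrightarrow> c \<in> Rd (ek k) \<Longrightarrow> \<psi> k \<theta> x c \<in> Rd (dk k)"
    and \<psi>_cont: "\<And>k. 1 \<le> k \<Longrightarrow> k \<le> K \<Longrightarrow>
        continuous_on (\<Theta> \<times> Rd (dk (k - 1)) \<times> Rd (ek k)) (\<lambda>(\<theta>, x, c). \<psi> k \<theta> x c)"
    and zk: "\<And>k. k \<le> K \<Longrightarrow> zk k \<in> Rd (dk k)"
    and zk_notin: "\<And>k. k \<le> K \<Longrightarrow> zk k \<notin>
        {mpnn_feat \<phi> \<psi> \<theta> G k v | \<theta> G v. \<theta> \<in> \<Theta> \<and> G \<in> graphs_le n \<Omega> \<and> v < fst G}"
  shows "\<forall>k\<le>K. \<exists>C c. C \<ge> c \<and> c > 0 \<and>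
     (\<forall>\<theta>\<in>\<Theta>. \<forall>G\<in>graphs_le n \<Omega>. \<forall>v<fst G.
        C * TD p d z n (comp_tree G k v) (blank z) \<ge> lp_norm p (dk k) (zk k - mpnn_feat \<phi> \<psi> \<theta> G k v) \<and>
        lp_norm p (dk k) (zk k - mpnn_feat \<phi> \<psi> \<theta> G k v) \<ge> c * TD p d z n (comp_tree G k v) (blank z))"
proof (intro allI impI)
  fix k assume kK: "k \<le> K"
  have p0: "p > 0" using p by simp
  let ?h = "\<lambda>x. lp_norm p d (x - z)"
  have hcont: "continuous_on \<Omega> ?h"
  proof (rule lp_cont[OF p])
    fix i show "continuous_on \<Omega> (\<lambda>x. (x - z) i)"
      unfolding minus_apply by (rule continuous_on_diff[OF coord_cont continuous_on_const])
  qed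
  have hpos: "?h x > 0" if x: "x \<in> \<Omega>" for x
  proof -
    have "x \<noteq> z" using x z(2) by blast
    then obtain i where i: "i < d" "x i \<noteq> z i" using Rd_neq[of x d z] x \<Omega>(2) z(1) by blast
    show ?thesis by (rule lp_pos[OF p0 i(1)]) (use i(2) in \<open>simp add: minus_apply\<close>)
  qed
  obtain a0 b0 where a0: "0 < a0" and ab0: "a0 \<le> b0" and hb: "\<forall>x\<in>\<Omega>. a0 \<le> ?h x \<and> ?h x \<le> b0"
    using bounds_compact[OF \<Omega>(1) hcont hpos] by blast
  define U where "U = b0 * (1 + real n)^k"
  have a0U: "a0 \<le> U"
  proof -
    have "1 \<le> (1 + real n)^k" by simp
    hence "b0 \<le> U" unfolding U_def using ab0 a0 by (simp add: mult_le_cancel_left1)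
    thus ?thesis using ab0 by simp
  qed
  have TDb: "a0 \<le> TD p d z n (comp_tree G k v) (blank z) \<and> TD p d z n (comp_tree G k v) (blank z) \<le> U"
    if G: "G \<in> graphs_le n \<Omega>" and v: "v < fst G" for G v
  proof -
    have Xv: "snd (snd G) v \<in> \<Omega>" using G v unfolding graphs_le_def by auto
    have db: "fdepth (blank z) = 0" unfolding blank_def by simp
    let ?j = "max (fdepth (comp_tree G k v)) (fdepth (blank z))"
    have TDe: "TD p d z n (comp_tree G k v) (blank z) = td_aux p d z n ?j (comp_tree G k v) (blank z)"
      unfolding TD_def ..
    have "a0 \<le> ?h (snd (snd G) v)" using hb Xv by blast
    also have "\<dots> = lp_norm p d (froot (comp_tree G k v) - froot (blank z))"
      by (simp add: root_comp blank_def)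
    also have "\<dots> \<le> TD p d z n (comp_tree G k v) (blank z)" unfolding TDe by (rule td_ge_root)
    finally have low: "a0 \<le> TD p d z n (comp_tree G k v) (blank z)" .
    have good: "goodT n \<Omega> z (comp_tree G k v)" unfolding goodT_def using G v by blast
    have "TD p d z n (comp_tree G k v) (blank z) \<le> b0 * real ((n+1)^?j)"
      unfolding TDe by (rule td_upper[OF p0 _ _ good]) (use a0 ab0 hb in auto)
    also have "\<dots> \<le> U"
    proof -
      have "?j \<le> k" using depth_comp[of G k v] db by simp
      hence "(1 + real n)^?j \<le> (1 + real n)^k" by (intro power_increasing) auto
      thus ?thesis unfolding U_def using a0 ab0 by (simp add: mult_left_mono)
    qed
    finally show ?thesis using low by simp
  qed
  define Dm where "Dm = (\<lambda>m::nat. {X::nat \<Rightarrow> nat \<Rightarrow> real. \<forall>i. X i \<in> (if i < m then \<Omega> else {\<lambda>_. 0})})"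
  define I where "I = {(m, E::nat\<Rightarrow>nat\<Rightarrow>bool). m \<le> n \<and> (\<forall>u v. E u v \<longrightarrow> u < m \<and> v < m \<and> u \<noteq> v \<and> E v u)}"
  define A where "A = (\<Union>ME\<in>I. \<Union>v\<in>{..<fst ME}.
      (\<lambda>x. mpnn_feat \<phi> \<psi> (fst x) (fst ME, snd ME, snd x) k v) ` (\<Theta> \<times> Dm (fst ME)))"
  have fc: "continuous_on (\<Theta> \<times> {X. \<forall>i<m. X i \<in> Rd (dk 0)}) (\<lambda>x. mpnn_feat \<phi> \<psi> (fst x) (m, E, snd x) k v) \<and>
    (\<forall>x \<in> \<Theta> \<times> {X. \<forall>i<m. X i \<in> Rd (dk 0)}. mpnn_feat \<phi> \<psi> (fst x) (m, E, snd x) k v \<in> Rd (dk k))"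
    if "m \<le> n" "v < m" for m E v
    by (rule feat_cont[where K=K and n=n and dk=dk and ek=ek and \<Theta>=\<Theta> and \<phi>=\<phi> and \<psi>=\<psi> and E=E and m=m and v=v and k=k, OF \<phi>_range \<phi>_cont \<psi>_range \<psi>_cont that(1) kK that(2)])
  have DmSub: "Dm m \<subseteq> {X. \<forall>i<m. X i \<in> Rd (dk 0)}" for m
    unfolding Dm_def using \<Omega>(2) d0 by auto
  have DmComp: "compact (Dm m)" for m
    unfolding Dm_def by (rule compact_Pi_UNIV) (use \<Omega>(1) in auto)
  have compA: "compact A"
    unfolding A_def
  proof (rule compact_UN)
    show "finite I" unfolding I_def by (rule finite_I)
    fix ME assume ME: "ME \<in> I"
    hence mn: "fst ME \<le> n" unfolding I_def by auto
    show "compact (\<Union>v\<in>{..<fst ME}. (\<lambda>x. mpnn_feat \<phi> \<psi> (fst x) (fst ME, snd ME, snd x) k v) ` (\<Theta> \<times> Dm (fst ME)))"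
    proof (rule compact_UN)
      fix v assume "v \<in> {..<fst ME}"
      hence v: "v < fst ME" by simp
      have "continuous_on (\<Theta> \<times> Dm (fst ME)) (\<lambda>x. mpnn_feat \<phi> \<psi> (fst x) (fst ME, snd ME, snd x) k v)"
        by (rule continuous_on_subset[OF conjunct1[OF fc[OF mn v]]]) (use DmSub in blast)
      thus "compact ((\<lambda>x. mpnn_feat \<phi> \<psi> (fst x) (fst ME, snd ME, snd x) k v) ` (\<Theta> \<times> Dm (fst ME)))"
        by (rule compact_continuous_image) (rule compact_Times[OF \<Theta> DmComp])
    qed simp
  qed
  have Aprop: "y \<in> Rd (dk k) \<and> y \<noteq> zk k" if y: "y \<in> A" for y
  proof -
    obtain m E v x where ME: "(m, E) \<in> I" and v: "v < m" and x: "x \<in> \<Theta> \<times> Dm m"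
      and ye: "y = mpnn_feat \<phi> \<psi> (fst x) (m, E, snd x) k v"
      using y unfolding A_def by fastforce
    have mn: "m \<le> n" and E: "\<forall>u v. E u v \<longrightarrow> u < m \<and> v < m \<and> u \<noteq> v \<and> E v u"
      using ME unfolding I_def by auto
    have "y \<in> Rd (dk k)" using fc[OF mn v] x DmSub unfolding ye by blast
    moreover have "(m, E, snd x) \<in> graphs_le n \<Omega>"
      using mn E x unfolding graphs_le_def Dm_def by (auto split: if_splits)
    hence "y \<in> {mpnn_feat \<phi> \<psi> \<theta> G k v | \<theta> G v. \<theta> \<in> \<Theta> \<and> G \<in> graphs_le n \<Omega> \<and> v < fst G}"
      unfolding ye using x v by force
    hence "y \<noteq> zk k" using zk_notin[OF kK] by blast
    ultimately show ?thesis by blast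
  qed
  have Ain: "mpnn_feat \<phi> \<psi> \<theta> G k v \<in> A" if th: "\<theta> \<in> \<Theta>" and G: "G \<in> graphs_le n \<Omega>" and v: "v < fst G" for \<theta> G v
  proof -
    obtain m E X where Ge: "G = (m, E, X)" by (cases G) auto
    have mn: "m \<le> n" and E: "\<forall>u v. E u v \<longrightarrow> u < m \<and> v < m \<and> u \<noteq> v \<and> E v u"
      and X: "\<forall>v<m. X v \<in> \<Omega>" using G unfolding Ge graphs_le_def by auto
    define X' where "X' = (\<lambda>i. if i < m then X i else (\<lambda>_. 0::real))"
    have X'D: "X' \<in> Dm m" unfolding Dm_def X'_def using X by auto
    have vm: "v < m" using v Ge by simp
    have "mpnn_feat \<phi> \<psi> \<theta> G k v = mpnn_feat \<phi> \<psi> \<theta> (m, E, X') k v"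
      unfolding Ge by (rule feat_restrict[OF _ vm]) (simp add: X'_def)
    also have "\<dots> \<in> (\<lambda>x. mpnn_feat \<phi> \<psi> (fst x) (fst (m,E), snd (m,E), snd x) k v) ` (\<Theta> \<times> Dm (fst (m,E)))"
      using th X'D by (intro image_eqI[where x = "(\<theta>, X')"]) auto
    finally show ?thesis unfolding A_def using mn E vm by (intro UN_I[of "(m,E)"] UN_I[of v]) (auto simp: I_def)
  qed
  let ?g = "\<lambda>y. lp_norm p (dk k) (zk k - y)"
  have gcont: "continuous_on A ?g"
  proof (rule lp_cont[OF p])
    fix i show "continuous_on A (\<lambda>y. (zk k - y) i)"
      unfolding minus_apply by (rule continuous_on_diff[OF continuous_on_const coord_cont])
  qed
  have gpos: "?g y > 0" if y: "y \<in> A" for y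
  proof -
    obtain i where i: "i < dk k" "zk k i \<noteq> y i" using Rd_neq[of "zk k" "dk k" y] zk[OF kK] Aprop[OF y] by metis
    show ?thesis by (rule lp_pos[OF p0 i(1)]) (use i(2) in \<open>simp add: minus_apply\<close>)
  qed
  obtain a1 b1 where a1: "0 < a1" and ab1: "a1 \<le> b1" and gb: "\<forall>y\<in>A. a1 \<le> ?g y \<and> ?g y \<le> b1"
    using bounds_compact[OF compA gcont gpos] by blast
  have U0: "0 < U" using a0 a0U by simp
  have c1: "a1 / U \<le> b1 / a0"
  proof -
    have "a1 / U \<le> a1 / a0" using a1 a0 a0U by (intro divide_left_mono) auto
    also have "\<dots> \<le> b1 / a0" using ab1 a0 by (intro divide_right_mono) auto
    finally show ?thesis .
  qed
  have c2: "0 < a1 / U" using a1 U0 by simp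
  have c3: "\<forall>\<theta>\<in>\<Theta>. \<forall>G\<in>graphs_le n \<Omega>. \<forall>v<fst G.
        b1 / a0 * TD p d z n (comp_tree G k v) (blank z) \<ge> lp_norm p (dk k) (zk k - mpnn_feat \<phi> \<psi> \<theta> G k v) \<and>
        lp_norm p (dk k) (zk k - mpnn_feat \<phi> \<psi> \<theta> G k v) \<ge> a1 / U * TD p d z n (comp_tree G k v) (blank z)"
  proof (intro ballI allI impI conjI)
    fix \<theta> G v assume th: "\<theta> \<in> \<Theta>" and G: "G \<in> graphs_le n \<Omega>" and v: "v < fst G"
    define t where "t = TD p d z n (comp_tree G k v) (blank z)"
    define gg where "gg = lp_norm p (dk k) (zk k - mpnn_feat \<phi> \<psi> \<theta> G k v)"
    have t: "a0 \<le> t" "t \<le> U" using TDb[OF G v] unfolding t_def by auto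
    have g: "a1 \<le> gg" "gg \<le> b1" using gb Ain[OF th G v] unfolding gg_def by auto
    have "gg \<le> b1" by (rule g(2))
    also have "b1 = b1 / a0 * a0" using a0 by simp
    also have "\<dots> \<le> b1 / a0 * t" using t(1) a0 a1 ab1 by (intro mult_left_mono) auto
    finally have f1: "gg \<le> b1 / a0 * t" .
    have "a1 / U * t \<le> a1 / U * U" using t(2) a1 U0 by (intro mult_left_mono) auto
    also have "\<dots> = a1" using U0 by simp
    also have "\<dots> \<le> gg" by (rule g(1))
    finally have f2: "a1 / U * t \<le> gg" .
    show "lp_norm p (dk k) (zk k - mpnn_feat \<phi> \<psi> \<theta> G k v) \<le> b1 / a0 * TD p d z n (comp_tree G k v) (blank z)"
      using f1 unfolding t_def gg_def .
    show "a1 / U * TD p d z n (comp_tree G k v) (blank z) \<le> lp_norm p (dk k) (zk k - mpnn_feat \<phi> \<psi> \<theta> G k v)"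
      using f2 unfolding t_def gg_def .
  qed
  show "\<exists>C c. C \<ge> c \<and> c > 0 \<and>
     (\<forall>\<theta>\<in>\<Theta>. \<forall>G\<in>graphs_le n \<Omega>. \<forall>v<fst G.
        C * TD p d z n (comp_tree G k v) (blank z) \<ge> lp_norm p (dk k) (zk k - mpnn_feat \<phi> \<psi> \<theta> G k v) \<and>
        lp_norm p (dk k) (zk k - mpnn_feat \<phi> \<psi> \<theta> G k v) \<ge> c * TD p d z n (comp_tree G k v) (blank z))"
    using c1 c2 c3 by blast
qed

end
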